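(* Let $V$ be a non-degenerate symplectic space of dimension $n=2r$ over a field $\mathbb{F}$ with $|\mathbb{F}|\ge3$, with hyperbolic basis $\{e_i,f_i\}_{i=1}^r$, $G=\mathrm{Sp}(V)$, and let $B$ be the stabilizer in $G$ of the standard chamber $C=\{C_l\}_{l=1}^{n-1}$ of $\Gamma(V)$. Then $B\cong(\mathbb{F}\rtimes\mathrm{GL}_1(\mathbb{F}))^{r}$, where for $j=1,\dots,r$ the $j$-th factor is realized as the group $B_j$ acting on $\langle e_j,f_j\rangle$, with respect to the basis $(e_j,f_j)$, by the matrices $\begin{pmatrix}a_j&b_j\\0&a_j^{-1}\end{pmatrix}$, $a_j\in\mathbb{F}^*$, $b_j\in\mathbb{F}$ (and $B$ is the group of block-diagonal elements of $G$ with such blocks). Moreover, the kernel of the action of $G$ on $\Gamma(V)$ is $\{\pm1\}$.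
   Context: $\mathsf{s}(e_i,e_j)=\mathsf{s}(f_i,f_j)=0$, $\mathsf{s}(e_i,f_j)=\delta_{ij}$. Matrices act with the convention that the $k$-th column gives the coordinates of the image of the $k$-th basis vector. $\mathrm{Rad}(U)=U\cap U^\perp$. $\Gamma(V)$: for $i\in\{1,\dots,n-1\}$ the objects of type $i$ are the $i$-dimensional subspaces $U$ with $\dim\mathrm{Rad}(U)\le1$; $X,Y$ incident iff $X=Y$, or $X\subseteq Y$ with $X\cap\mathrm{Rad}(Y)=0$, or vice versa. With $h_{2i-1}=e_i$, $h_{2i}=f_i$, the standard chamber is $C_l=\langle h_1,\dots,h_l\rangle$. *)

theory Defs
  imports Complex_Main "HOL-Library.Function_Algebras"
begin

text \<open>Vectors of V = F^n, n = 2r, are functions nat => F supported on {0..<2r}.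
  0-indexed standard basis: index 2i is e_(i+1), index 2i+1 is f_(i+1)
  (so h_k of the paper is index k-1).\<close>

definition vscale :: "'a::field \<Rightarrow> (nat \<Rightarrow> 'a) \<Rightarrow> (nat \<Rightarrow> 'a)" where
  "vscale c v = (\<lambda>i. c * v i)"

lemma vector_space_vscale: "vector_space (vscale :: 'a::field \<Rightarrow> _)"
  by unfold_locales (auto simp: vscale_def fun_eq_iff algebra_simps)

definition Vsp :: "nat \<Rightarrow> (nat \<Rightarrow> 'a::field) set" where
  "Vsp r = {v. \<forall>i\<ge>2*r. v i = 0}"

definition symp :: "nat \<Rightarrow> (nat \<Rightarrow> 'a::field) \<Rightarrow> (nat \<Rightarrow> 'a) \<Rightarrow> 'a" where
  "symp r x y = (\<Sum>i<r. x (2*i) * y (2*i+1) - x (2*i+1) * y (2*i))"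

text \<open>Matrices: column k = coordinates of the image of the k-th basis vector.\<close>
definition mat_app :: "nat \<Rightarrow> (nat \<Rightarrow> nat \<Rightarrow> 'a::field) \<Rightarrow> (nat \<Rightarrow> 'a) \<Rightarrow> (nat \<Rightarrow> 'a)" where
  "mat_app r M v = (\<lambda>i. if i < 2*r then (\<Sum>j<2*r. M i j * v j) else 0)"

definition matmul :: "nat \<Rightarrow> (nat \<Rightarrow> nat \<Rightarrow> 'a::field) \<Rightarrow> (nat \<Rightarrow> nat \<Rightarrow> 'a) \<Rightarrow> (nat \<Rightarrow> nat \<Rightarrow> 'a)" where
  "matmul r M N = (\<lambda>i j. \<Sum>k<2*r. M i k * N k j)"

definition is_mat :: "nat \<Rightarrow> (nat \<Rightarrow> nat \<Rightarrow> 'a::field) \<Rightarrow> bool" where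
  "is_mat r M \<longleftrightarrow> (\<forall>i j. (2*r \<le> i \<or> 2*r \<le> j) \<longrightarrow> M i j = 0)"

definition idmat :: "nat \<Rightarrow> nat \<Rightarrow> nat \<Rightarrow> 'a::field" where
  "idmat r = (\<lambda>i j. if i = j \<and> i < 2*r then 1 else 0)"

definition Sp :: "nat \<Rightarrow> (nat \<Rightarrow> nat \<Rightarrow> 'a::field) set" where
  "Sp r = {M. is_mat r M \<and> bij_betw (mat_app r M) (Vsp r) (Vsp r) \<and>
              (\<forall>x\<in>Vsp r. \<forall>y\<in>Vsp r. symp r (mat_app r M x) (mat_app r M y) = symp r x y)}"

definition perp :: "nat \<Rightarrow> (nat \<Rightarrow> 'a::field) set \<Rightarrow> (nat \<Rightarrow> 'a) set" where
  "perp r U = {v \<in> Vsp r. \<forall>u\<in>U. symp r v u = 0}"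

definition Rad :: "nat \<Rightarrow> (nat \<Rightarrow> 'a::field) set \<Rightarrow> (nat \<Rightarrow> 'a) set" where
  "Rad r U = U \<inter> perp r U"

abbreviation vdim :: "(nat \<Rightarrow> 'a::field) set \<Rightarrow> nat" where
  "vdim \<equiv> vector_space.dim vscale"

abbreviation vspan :: "(nat \<Rightarrow> 'a::field) set \<Rightarrow> (nat \<Rightarrow> 'a) set" where
  "vspan \<equiv> module.span vscale"

definition Gamma_obj :: "nat \<Rightarrow> (nat \<Rightarrow> 'a::field) set set" where
  "Gamma_obj r = {U. module.subspace vscale U \<and> U \<subseteq> Vsp r \<and>
       1 \<le> vdim U \<and> vdim U \<le> 2*r - 1 \<and> vdim (Rad r U) \<le> 1}"

definition stdvec :: "nat \<Rightarrow> nat \<Rightarrow> 'a::field" where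
  "stdvec k = (\<lambda>i. if i = k then 1 else 0)"

definition Cham :: "nat \<Rightarrow> (nat \<Rightarrow> 'a::field) set" where
  "Cham l = vspan (stdvec ` {..<l})"

definition Borel :: "nat \<Rightarrow> (nat \<Rightarrow> nat \<Rightarrow> 'a::field) set" where
  "Borel r = {g \<in> Sp r. \<forall>l\<in>{1..2*r-1}. mat_app r g ` Cham l = Cham l}"

text \<open>Block-diagonal matrix whose j-th 2x2 block (basis e_j,f_j) is [[a j, b j],[0, (a j)^-1]].\<close>
definition blockmat :: "nat \<Rightarrow> (nat \<Rightarrow> 'a::field) \<Rightarrow> (nat \<Rightarrow> 'a) \<Rightarrow> nat \<Rightarrow> nat \<Rightarrow> 'a" where
  "blockmat r a b = (\<lambda>i j. if i < 2*r \<and> j < 2*r \<and> i div 2 = j div 2 then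
       (if even i \<and> even j then a (i div 2)
        else if even i \<and> odd j then b (i div 2)
        else if odd i \<and> odd j then inverse (a (i div 2))
        else 0) else 0)"

text \<open>Parameters of (F \<rtimes> GL_1(F))^r: pairs (a,b) with a j nonzero for j<r,
  normalized (a j = 1, b j = 0) for j >= r.\<close>
definition params :: "nat \<Rightarrow> ((nat \<Rightarrow> 'a::field) \<times> (nat \<Rightarrow> 'a)) set" where
  "params r = {(a,b). (\<forall>j<r. a j \<noteq> 0) \<and> (\<forall>j\<ge>r. a j = 1 \<and> b j = 0)}"

definition pmul :: "((nat \<Rightarrow> 'a::field) \<times> (nat \<Rightarrow> 'a)) \<Rightarrow> ((nat \<Rightarrow> 'a) \<times> (nat \<Rightarrow> 'a))
     \<Rightarrow> ((nat \<Rightarrow> 'a) \<times> (nat \<Rightarrow> 'a))" where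
  "pmul p q = ((\<lambda>j. fst p j * fst q j),
               (\<lambda>j. fst p j * snd q j + snd p j * inverse (fst q j)))"

end

theory Submission imports Defs begin

interpretation V: vector_space "vscale :: 'a::field \<Rightarrow> _"
  by (rule vector_space_vscale)

definition Lset :: "nat \<Rightarrow> (nat \<Rightarrow> 'a::field) set" where
  "Lset l = {v. \<forall>i\<ge>l. v i = 0}"

lemma sum_2r: "(\<Sum>j<2*(r::nat). f j) = (\<Sum>i<r. f (2*i) + f (2*i+1))"
  by (induction r) (auto simp: sum.distrib add_ac)

lemma sum_single: "finite A \<Longrightarrow> k \<in> A \<Longrightarrow> (\<And>i. i \<in> A \<Longrightarrow> i \<noteq> k \<Longrightarrow> f i = 0) \<Longrightarrow> sum f A = f k"
  by (simp add: sum.remove sum.neutral)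

lemma symp_stdvec_odd: "k < r \<Longrightarrow> symp r x (stdvec (Suc (2*k))) = x (2*k)"
  unfolding symp_def by (subst sum_single[of _ k]) (auto simp: stdvec_def)
lemma symp_stdvec_even: "k < r \<Longrightarrow> symp r x (stdvec (2*k)) = - x (Suc (2*k))"
  unfolding symp_def by (subst sum_single[of _ k]) (auto simp: stdvec_def)
lemma symp_stdvec_odd_l: "k < r \<Longrightarrow> symp r (stdvec (Suc (2*k))) y = - y (2*k)"
  unfolding symp_def by (subst sum_single[of _ k]) (auto simp: stdvec_def)
lemma symp_stdvec_even_l: "k < r \<Longrightarrow> symp r (stdvec (2*k)) y = y (Suc (2*k))"
  unfolding symp_def by (subst sum_single[of _ k]) (auto simp: stdvec_def)

lemma mat_app_col: "j < 2*r \<Longrightarrow> mat_app r g (stdvec j) = (\<lambda>i. if i < 2*r then g i j else 0)"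
  unfolding mat_app_def by (rule ext) (subst sum_single[of _ j], auto simp: stdvec_def)

lemma Cham_Lset: "Cham l = (Lset l :: (nat \<Rightarrow> 'a::field) set)"
proof
  have "V.subspace (Lset l :: (nat \<Rightarrow> 'a) set)"
    unfolding V.subspace_def Lset_def by (auto simp: vscale_def)
  moreover have "stdvec ` {..<l} \<subseteq> (Lset l :: (nat \<Rightarrow> 'a) set)"
    by (auto simp: Lset_def stdvec_def)
  ultimately show "Cham l \<subseteq> (Lset l :: (nat \<Rightarrow> 'a) set)"
    unfolding Cham_def by (rule V.span_minimal[rotated])
next
  show "Lset l \<subseteq> (Cham l :: (nat \<Rightarrow> 'a) set)"
  proof
    fix v :: "nat \<Rightarrow> 'a" assume v: "v \<in> Lset l"
    have "v = (\<Sum>i<l. vscale (v i) (stdvec i))"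
    proof
      fix j
      have "(\<Sum>i<l. vscale (v i) (stdvec i)) j = (\<Sum>i<l. vscale (v i) (stdvec i) j)"
        by (induction l) auto
      also have "\<dots> = v j"
        using v by (cases "j < l") (subst sum_single[of _ j], auto simp: vscale_def stdvec_def Lset_def)+
      finally show "v j = (\<Sum>i<l. vscale (v i) (stdvec i)) j" by simp
    qed
    also have "\<dots> \<in> Cham l" unfolding Cham_def
      by (intro V.span_sum V.span_scale V.span_base) auto
    finally show "v \<in> Cham l" .
  qed
qed


lemma idx_cases:
  assumes "(i::nat) < 2*r"
  obtains k where "k < r" "i = 2*k" | k where "k < r" "i = 2*k+1"
proof -
  have k: "i div 2 < r" using assms by presburger
  show thesis
  proof (cases "even i")
    case True
    then have "i = 2 * (i div 2)" by simp
    with k that(1) show thesis by blast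
  next
    case False
    then have "i = 2 * (i div 2) + 1" by simp
    with k that(2) show thesis by blast
  qed
qed

lemma blockmat_app: "mat_app r (blockmat r a b) v = (\<lambda>i. if i < 2*r then
   (if even i then a (i div 2) * v i + b (i div 2) * v (Suc i) else inverse (a (i div 2)) * v i) else 0)"
proof
  fix i
  show "mat_app r (blockmat r a b) v i = (if i < 2*r then
   (if even i then a (i div 2) * v i + b (i div 2) * v (Suc i) else inverse (a (i div 2)) * v i) else 0)"
  proof (cases "i < 2*r")
    case True
    then show ?thesis
    proof (cases rule: idx_cases)
      case (1 k)
      then show ?thesis unfolding mat_app_def sum_2r
        by (subst sum_single[of _ k]) (auto simp: blockmat_def)
    next
      case (2 k)
      then show ?thesis unfolding mat_app_def sum_2r
        by (subst sum_single[of _ k]) (auto simp: blockmat_def)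
    qed
  qed (simp add: mat_app_def)
qed

lemma mat_app_Vsp: "mat_app r M v \<in> Vsp r"
  by (simp add: mat_app_def Vsp_def)

lemma blockmat_symp:
  assumes "\<forall>j<r. a j \<noteq> 0"
  shows "symp r (mat_app r (blockmat r a b) x) (mat_app r (blockmat r a b) y) = symp r x y"
  unfolding symp_def blockmat_app
proof (rule sum.cong)
  fix i assume "i \<in> {..<r}"
  then have i: "i < r" by simp
  then have "a i \<noteq> 0" using assms by auto
  then show "(if 2 * i < 2 * r then if even (2 * i) then a (2 * i div 2) * x (2 * i) + b (2 * i div 2) * x (Suc (2 * i)) else inverse (a (2 * i div 2)) * x (2 * i) else 0) *
         (if 2 * i + 1 < 2 * r then if even (2 * i + 1) then a ((2 * i + 1) div 2) * y (2 * i + 1) + b ((2 * i + 1) div 2) * y (Suc (2 * i + 1)) else inverse (a ((2 * i + 1) div 2)) * y (2 * i + 1) else 0) -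
         (if 2 * i + 1 < 2 * r then if even (2 * i + 1) then a ((2 * i + 1) div 2) * x (2 * i + 1) + b ((2 * i + 1) div 2) * x (Suc (2 * i + 1)) else inverse (a ((2 * i + 1) div 2)) * x (2 * i + 1) else 0) *
         (if 2 * i < 2 * r then if even (2 * i) then a (2 * i div 2) * y (2 * i) + b (2 * i div 2) * y (Suc (2 * i)) else inverse (a (2 * i div 2)) * y (2 * i) else 0) =
         x (2 * i) * y (2 * i + 1) - x (2 * i + 1) * y (2 * i)"
    using i by (simp add: field_simps)
qed simp

definition binv :: "(nat \<Rightarrow> 'a::field) \<Rightarrow> nat \<Rightarrow> 'a" where
  "binv a = (\<lambda>j. inverse (a j))"

lemma blockmat_inv1:
  assumes "\<forall>j<r. a j \<noteq> 0" "v \<in> Vsp r"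
  shows "mat_app r (blockmat r a b) (mat_app r (blockmat r (binv a) (\<lambda>j. - b j)) v) = v"
proof
  fix i
  show "mat_app r (blockmat r a b) (mat_app r (blockmat r (binv a) (\<lambda>j. - b j)) v) i = v i"
  proof (cases "i < 2*r")
    case True
    then show ?thesis
    proof (cases rule: idx_cases)
      case (1 k)
      then have "a k \<noteq> 0" using assms by auto
      with 1 show ?thesis by (simp add: blockmat_app binv_def field_simps)
    next
      case (2 k)
      then have "a k \<noteq> 0" using assms by auto
      with 2 show ?thesis by (simp add: blockmat_app binv_def field_simps)
    qed
  qed (use assms in \<open>simp add: mat_app_def Vsp_def\<close>)
qed

lemma blockmat_inv2:
  assumes "\<forall>j<r. a j \<noteq> 0" "v \<in> Vsp r"
  shows "mat_app r (blockmat r (binv a) (\<lambda>j. - b j)) (mat_app r (blockmat r a b) v) = v"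
proof
  fix i
  show "mat_app r (blockmat r (binv a) (\<lambda>j. - b j)) (mat_app r (blockmat r a b) v) i = v i"
  proof (cases "i < 2*r")
    case True
    then show ?thesis
    proof (cases rule: idx_cases)
      case (1 k)
      then have "a k \<noteq> 0" using assms by auto
      with 1 show ?thesis by (simp add: blockmat_app binv_def field_simps)
    next
      case (2 k)
      then have "a k \<noteq> 0" using assms by auto
      with 2 show ?thesis by (simp add: blockmat_app binv_def field_simps)
    qed
  qed (use assms in \<open>simp add: mat_app_def Vsp_def\<close>)
qed

lemma blockmat_Lset: "v \<in> Lset l \<Longrightarrow> mat_app r (blockmat r a b) v \<in> Lset l"
  by (auto simp: blockmat_app Lset_def)

lemma Lset_Vsp: "l \<le> 2*r \<Longrightarrow> Lset l \<subseteq> Vsp r"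
  by (auto simp: Lset_def Vsp_def)

lemma blockmat_Borel:
  assumes "(a, b) \<in> params r"
  shows "blockmat r a b \<in> Borel r"
proof -
  have a: "\<forall>j<r. a j \<noteq> 0" using assms by (simp add: params_def)
  let ?f = "mat_app r (blockmat r a b)"
  let ?g = "mat_app r (blockmat r (binv a) (\<lambda>j. - b j))"
  have "is_mat r (blockmat r a b)" by (simp add: is_mat_def blockmat_def)
  moreover have "bij_betw ?f (Vsp r) (Vsp r)"
    by (rule bij_betw_byWitness[where f' = ?g]) (auto simp: mat_app_Vsp blockmat_inv1[OF a] blockmat_inv2[OF a])
  moreover have "\<forall>x\<in>Vsp r. \<forall>y\<in>Vsp r. symp r (?f x) (?f y) = symp r x y"
    using blockmat_symp[OF a] by blast
  moreover have "?f ` Cham l = Cham l" if l: "l \<in> {1..2*r-1}" for l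
  proof
    show "?f ` Cham l \<subseteq> Cham l" by (auto simp: Cham_Lset blockmat_Lset)
    show "Cham l \<subseteq> ?f ` Cham l"
    proof
      fix w :: "nat \<Rightarrow> 'a" assume w: "w \<in> Cham l"
      have "l \<le> 2*r" using l by auto
      then have "w \<in> Vsp r" using Lset_Vsp[of l r] w by (auto simp: Cham_Lset)
      then have "w = ?f (?g w)" using blockmat_inv1[OF a] by simp
      moreover have "?g w \<in> Cham l" using w by (simp add: Cham_Lset blockmat_Lset)
      ultimately show "w \<in> ?f ` Cham l" by blast
    qed
  qed
  ultimately show ?thesis by (simp add: Borel_def Sp_def)
qed

lemma blockmat_mul:
  "blockmat r (\<lambda>j. a j * a' j) (\<lambda>j. a j * b' j + b j * inverse (a' j))
     = matmul r (blockmat r a b) (blockmat r a' b')"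
proof (rule ext, rule ext)
  fix i j
  show "blockmat r (\<lambda>j. a j * a' j) (\<lambda>j. a j * b' j + b j * inverse (a' j)) i j
     = matmul r (blockmat r a b) (blockmat r a' b') i j"
  proof (cases "i < 2*r")
    case True
    have "matmul r (blockmat r a b) (blockmat r a' b') i j
        = mat_app r (blockmat r a b) (\<lambda>k. blockmat r a' b' k j) i"
      using True by (simp add: matmul_def mat_app_def)
    also have "\<dots> = blockmat r (\<lambda>j. a j * a' j) (\<lambda>j. a j * b' j + b j * inverse (a' j)) i j"
      using True
    proof (cases rule: idx_cases)
      case (1 k)
      show ?thesis
      proof (cases "j < 2*r")
        case True
        then show ?thesis
        proof (cases rule: idx_cases)
          case (1 k')
          then show ?thesis using \<open>k < r\<close> \<open>i = 2*k\<close>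
            by (simp add: blockmat_app) (auto simp: blockmat_def algebra_simps)
        next
          case (2 k')
          then show ?thesis using \<open>k < r\<close> \<open>i = 2*k\<close>
            by (simp add: blockmat_app) (auto simp: blockmat_def algebra_simps)
        qed
      qed (use 1 in \<open>simp add: mat_app_def blockmat_def\<close>)
    next
      case (2 k)
      show ?thesis
      proof (cases "j < 2*r")
        case True
        then show ?thesis
        proof (cases rule: idx_cases)
          case (1 k')
          then show ?thesis using \<open>k < r\<close> \<open>i = 2*k+1\<close>
            by (simp add: blockmat_app) (auto simp: blockmat_def algebra_simps)
        next
          case (2 k')
          then show ?thesis using \<open>k < r\<close> \<open>i = 2*k+1\<close>
            by (simp add: blockmat_app) (auto simp: blockmat_def algebra_simps)
        qed
      qed (use 2 in \<open>simp add: mat_app_def blockmat_def\<close>)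
    qed
    finally show ?thesis by simp
  qed (simp add: matmul_def blockmat_def)
qed

lemma blockmat_inj: "inj_on (\<lambda>(a,b). blockmat r a b) (params r)"
proof (rule inj_onI, clarify)
  fix a b a' b' :: "nat \<Rightarrow> 'a"
  assume p: "(a, b) \<in> params r" "(a', b') \<in> params r" and e: "blockmat r a b = blockmat r a' b'"
  have "a j = a' j \<and> b j = b' j" for j
  proof (cases "j < r")
    case True
    have "blockmat r a b (2*j) (2*j) = blockmat r a' b' (2*j) (2*j)"
         "blockmat r a b (2*j) (2*j+1) = blockmat r a' b' (2*j) (2*j+1)" using e by auto
    then show ?thesis using True by (simp add: blockmat_def)
  next
    case False
    then show ?thesis using p by (simp add: params_def)
  qed
  then show "a = a' \<and> b = b'" by auto
qed


lemma symp_scale_l: "symp r (vscale c x) y = c * symp r x y"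
  unfolding symp_def vscale_def by (simp add: sum_distrib_left algebra_simps)

lemma Lset_2r: "Lset (2*r) = Vsp r"
  by (auto simp: Lset_def Vsp_def)

lemma stdvec_Lset: "j < l \<Longrightarrow> stdvec j \<in> Lset l"
  by (auto simp: Lset_def stdvec_def)

lemma Borel_block:
  assumes g: "g \<in> Borel r"
  shows "\<exists>p\<in>params r. g = (\<lambda>(a,b). blockmat r a b) p"
proof -
  let ?g = "mat_app r g"
  have ism: "is_mat r g" and bij: "bij_betw ?g (Vsp r) (Vsp r)"
    and sy: "\<And>x y. x \<in> Vsp r \<Longrightarrow> y \<in> Vsp r \<Longrightarrow> symp r (?g x) (?g y) = symp r x y"
    using g by (auto simp: Borel_def Sp_def)
  have stab: "?g ` Lset l = Lset l" if "1 \<le> l" "l \<le> 2*r" for l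
  proof (cases "l = 2*r")
    case True
    then show ?thesis using bij by (simp add: Lset_2r bij_betw_def)
  next
    case False
    then have "l \<in> {1..2*r-1}" using that by auto
    then show ?thesis using g by (auto simp: Borel_def Cham_Lset)
  qed
  have col: "g i j = ?g (stdvec j) i" if "i < 2*r" "j < 2*r" for i j
    using that by (simp add: mat_app_col)
  have upper: "g i j = 0" if "i < 2*r" "j < 2*r" "j < i" for i j
  proof -
    have "stdvec j \<in> Lset (Suc j)" by (rule stdvec_Lset) simp
    then have "?g (stdvec j) \<in> Lset (Suc j)" using stab[of "Suc j"] that by auto
    then show ?thesis using col[OF that(1,2)] that by (simp add: Lset_def)
  qed
  have sz: "symp r (?g (stdvec j)) (stdvec m) = 0"
    if "k < r" "m < 2*k+2" "k < j div 2" "j < 2*r" for j k m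
  proof -
    have "stdvec m \<in> Lset (2*k+2)" using that by (intro stdvec_Lset) 
    moreover have "?g ` Lset (2*k+2) = Lset (2*k+2)" using stab[of "2*k+2"] \<open>k < r\<close> by simp
    ultimately obtain y where y: "y \<in> Lset (2*k+2)" "stdvec m = ?g y"
      by (metis imageE)
    have yV: "y \<in> Vsp r" using y Lset_Vsp[of "2*k+2" r] that by auto
    have eV: "stdvec j \<in> Vsp r" using that by (simp add: Vsp_def stdvec_def)
    have "symp r (?g (stdvec j)) (stdvec m) = symp r (stdvec j) y"
      using y(2) sy[OF eV yV] by simp
    also have "\<dots> = 0"
      using \<open>j < 2*r\<close>
    proof (cases rule: idx_cases)
      case (1 k')
      then show ?thesis using y(1) that symp_stdvec_even_l[of k' r y] by (simp add: Lset_def)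
    next
      case (2 k')
      then show ?thesis using y(1) that symp_stdvec_odd_l[of k' r y] by (simp add: Lset_def)
    qed
    finally show ?thesis .
  qed
  have lower: "g i j = 0" if "i < 2*r" "j < 2*r" "i div 2 < j div 2" for i j
    using that(1)
  proof (cases rule: idx_cases)
    case (1 k)
    then have "g i j = symp r (?g (stdvec j)) (stdvec (2*k+1))"
      using col[OF that(1,2)] by (simp add: symp_stdvec_odd)
    also have "\<dots> = 0" using sz[of k "2*k+1" j] 1 that by simp
    finally show ?thesis .
  next
    case (2 k)
    then have "g i j = - symp r (?g (stdvec j)) (stdvec (2*k))"
      using col[OF that(1,2)] by (simp add: symp_stdvec_even)
    also have "\<dots> = 0" using sz[of k "2*k" j] 2 that by simp
    finally show ?thesis .
  qed
  have diag: "g (2*k) (2*k) * g (2*k+1) (2*k+1) = 1" if k: "k < r" for k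
  proof -
    have c: "?g (stdvec (2*k)) = vscale (g (2*k) (2*k)) (stdvec (2*k))"
    proof
      fix i
      show "?g (stdvec (2*k)) i = vscale (g (2*k) (2*k)) (stdvec (2*k)) i"
      proof (cases "i < 2*r")
        case True
        have "g i (2*k) = 0" if "i \<noteq> 2*k"
        proof (cases "i < 2*k")
          case True
          then show ?thesis using lower[of i "2*k"] \<open>i < 2*r\<close> k by simp
        next
          case False
          then show ?thesis using upper[of i "2*k"] \<open>i < 2*r\<close> k that by simp
        qed
        moreover have "?g (stdvec (2*k)) i = g i (2*k)" using True k by (simp add: mat_app_col)
        ultimately show ?thesis by (auto simp: vscale_def stdvec_def)
      qed (use k in \<open>simp add: mat_app_def vscale_def stdvec_def\<close>)
    qed
    have eV: "stdvec n \<in> Vsp r" if "n < 2*r" for n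
      using that by (simp add: Vsp_def stdvec_def)
    have "1 = symp r (stdvec (2*k)) (stdvec (2*k+1))"
      using k symp_stdvec_even_l[of k r "stdvec (Suc (2*k))"] by (simp add: stdvec_def)
    also have "\<dots> = symp r (?g (stdvec (2*k))) (?g (stdvec (2*k+1)))"
      using sy[OF eV eV] k by simp
    also have "\<dots> = g (2*k) (2*k) * ?g (stdvec (2*k+1)) (2*k+1)"
      unfolding c symp_scale_l using k by (simp add: symp_stdvec_even_l)
    also have "\<dots> = g (2*k) (2*k) * g (2*k+1) (2*k+1)"
      using k by (simp add: mat_app_col)
    finally show ?thesis by simp
  qed
  define a where "a = (\<lambda>j. if j < r then g (2*j) (2*j) else 1)"
  define b where "b = (\<lambda>j. if j < r then g (2*j) (2*j+1) else 0)"
  have p: "(a, b) \<in> params r"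
  proof -
    have "g (2*j) (2*j) \<noteq> 0" if "j < r" for j
      using diag[OF that] by (metis mult_zero_left zero_neq_one)
    then show ?thesis unfolding params_def a_def b_def by auto
  qed
  have "g = blockmat r a b"
  proof (rule ext, rule ext)
    fix i j
    show "g i j = blockmat r a b i j"
    proof (cases "i < 2*r \<and> j < 2*r")
      case False
      then show ?thesis using ism by (auto simp: is_mat_def blockmat_def)
    next
      case True
      then have i: "i < 2*r" and j: "j < 2*r" by auto
      show ?thesis
      proof (cases "i div 2 < j div 2")
        case True
        then show ?thesis using lower[OF i j] by (simp add: blockmat_def)
      next
        case False
        show ?thesis
        proof (cases "j div 2 < i div 2")
          case True
          then have "j < i" by presburger
          then show ?thesis using upper[OF i j] True by (simp add: blockmat_def)
        next
          case False
          with \<open>\<not> i div 2 < j div 2\<close> have eq: "i div 2 = j div 2" by simp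
          from i show ?thesis
          proof (cases rule: idx_cases)
            case (1 k)
            then show ?thesis using eq j by (auto simp: blockmat_def a_def b_def elim!: oddE)
          next
            case (2 k)
            then have jj: "j = 2*k \<or> j = 2*k+1" using eq by presburger
            then show ?thesis
            proof
              assume "j = 2*k"
              then show ?thesis using 2 upper[OF i j] by (simp add: blockmat_def)
            next
              assume "j = 2*k+1"
              moreover have "g (2*k+1) (2*k+1) = inverse (g (2*k) (2*k))"
                using diag[of k] 2 by (metis inverse_unique mult.commute)
              ultimately show ?thesis using 2 by (simp add: blockmat_def a_def)
            qed
          qed
        qed
      qed
    qed
  qed
  with p show ?thesis by (intro bexI[of _ "(a,b)"]) auto
qed


lemma mat_app_id: "v \<in> Vsp r \<Longrightarrow> mat_app r (idmat r) v = v"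
proof
  fix i assume v: "v \<in> Vsp r"
  show "mat_app r (idmat r) v i = v i"
  proof (cases "i < 2*r")
    case True
    then show ?thesis unfolding mat_app_def
      by (subst sum_single[of _ i]) (auto simp: idmat_def)
  qed (use v in \<open>simp add: mat_app_def Vsp_def\<close>)
qed

lemma mat_app_neg: "mat_app r (\<lambda>i j. - M i j) v = (\<lambda>i. - mat_app r M v i)"
  by (rule ext) (simp add: mat_app_def sum_negf[symmetric])

lemma mat_app_add: "mat_app r M (x + y) = mat_app r M x + mat_app r M y"
  by (auto simp: mat_app_def sum.distrib algebra_simps)

lemma symp_neg: "symp r (\<lambda>i. - x i) (\<lambda>i. - y i) = symp r x y"
  by (simp add: symp_def)

lemma symp_scale_r: "symp r x (vscale c y) = c * symp r x y"
  unfolding symp_def vscale_def by (simp add: sum_distrib_left algebra_simps)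

lemma Vsp_subspace: "V.subspace (Vsp r :: (nat \<Rightarrow> 'a::field) set)"
  unfolding V.subspace_def Vsp_def by (auto simp: vscale_def)

lemma id_in_kernel: "idmat r \<in> {g \<in> Sp r. \<forall>U\<in>Gamma_obj r. mat_app r g ` U = U}"
proof -
  have "is_mat r (idmat r :: nat \<Rightarrow> nat \<Rightarrow> 'a)" by (simp add: is_mat_def idmat_def)
  moreover have "bij_betw (mat_app r (idmat r)) (Vsp r) (Vsp r :: (nat \<Rightarrow> 'a) set)"
    by (rule bij_betw_byWitness[where f' = "mat_app r (idmat r)"]) (auto simp: mat_app_id)
  moreover have "mat_app r (idmat r) ` U = U" if "U \<in> Gamma_obj r" for U :: "(nat \<Rightarrow> 'a) set"
  proof -
    have "U \<subseteq> Vsp r" using that by (simp add: Gamma_obj_def)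
    then show ?thesis by (auto simp: mat_app_id image_iff) (metis mat_app_id subsetD)
  qed
  ultimately show ?thesis by (auto simp: Sp_def mat_app_id)
qed

lemma negid_in_kernel: "(\<lambda>i j. - idmat r i j) \<in> {g \<in> Sp r. \<forall>U\<in>Gamma_obj r. mat_app r g ` U = (U :: (nat \<Rightarrow> 'a::field) set)}"
proof -
  let ?n = "mat_app r (\<lambda>i j. - idmat r i j) :: (nat \<Rightarrow> 'a) \<Rightarrow> _"
  have n: "?n v = (\<lambda>i. - v i)" if "v \<in> Vsp r" for v
    using that by (simp add: mat_app_neg mat_app_id)
  have nV: "(\<lambda>i. - v i) \<in> Vsp r" if "v \<in> Vsp r" for v :: "nat \<Rightarrow> 'a"
    using that by (simp add: Vsp_def)
  have "is_mat r (\<lambda>i j. - idmat r i j :: 'a)" by (simp add: is_mat_def idmat_def)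
  moreover have "bij_betw ?n (Vsp r) (Vsp r)"
    by (rule bij_betw_byWitness[where f' = ?n]) (auto simp: n nV mat_app_Vsp)
  moreover have "?n ` U = U" if "U \<in> Gamma_obj r" for U :: "(nat \<Rightarrow> 'a) set"
  proof -
    have U: "U \<subseteq> Vsp r" "V.subspace U" using that by (auto simp: Gamma_obj_def)
    have m: "(\<lambda>i. - v i) \<in> U" if "v \<in> U" for v
    proof -
      have "vscale (-1) v \<in> U" using V.subspace_scale[OF U(2) that] .
      then show ?thesis by (simp add: vscale_def)
    qed
    show ?thesis
    proof
      show "?n ` U \<subseteq> U" using U m n by auto
      show "U \<subseteq> ?n ` U"
      proof
        fix v assume v: "v \<in> U"
        then have "v = ?n (\<lambda>i. - v i)" using U n nV by auto
        then show "v \<in> ?n ` U" using m[OF v] by blast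
      qed
    qed
  qed
  ultimately show ?thesis by (auto simp: Sp_def n nV symp_neg)
qed

lemma kernel_sub:
  assumes r: "1 \<le> r" and g: "g \<in> Sp r" and fx: "\<forall>U\<in>Gamma_obj r. mat_app r g ` U = (U :: (nat \<Rightarrow> 'a::field) set)"
  shows "g = idmat r \<or> g = (\<lambda>i j. - idmat r i j)"
proof -
  let ?g = "mat_app r g"
  have ism: "is_mat r g"
    and sy: "\<And>x y. x \<in> Vsp r \<Longrightarrow> y \<in> Vsp r \<Longrightarrow> symp r (?g x) (?g y) = symp r x y"
    using g by (auto simp: Sp_def)
  have line: "\<exists>c. ?g v = vscale c v" if v: "v \<in> Vsp r" "v \<noteq> 0" for v
  proof -
    let ?U = "vspan {v} :: (nat \<Rightarrow> 'a) set"
    have sub: "?U \<subseteq> Vsp r" using v Vsp_subspace by (intro V.span_minimal) auto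
    have "V.independent {v}" using v by (intro V.independent_insertI) (auto simp: V.span_empty V.independent_empty)
    then have d1: "vdim ?U = 1" by (simp add: V.dim_span_eq_card_independent V.dim_eq_card_independent)
    have "vdim (Rad r ?U) \<le> card {v}"
      by (rule V.dim_le_card) (auto simp: Rad_def)
    then have "?U \<in> Gamma_obj r" using sub d1 r by (simp add: Gamma_obj_def)
    then have "?g ` ?U = ?U" using fx by blast
    moreover have "v \<in> ?U" by (simp add: V.span_base)
    ultimately have "?g v \<in> ?U" by blast
    then show ?thesis by (auto simp: V.span_singleton)
  qed
  have eV: "stdvec j \<in> Vsp r" if "j < 2*r" for j :: nat
    using that by (simp add: Vsp_def stdvec_def)
  have eN: "stdvec j \<noteq> (0 :: nat \<Rightarrow> 'a)" for j :: nat
    by (metis stdvec_def zero_neq_one zero_fun_def)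
  have offd: "g i j = 0" if ij: "i < 2*r" "j < 2*r" "i \<noteq> j" for i j
  proof -
    obtain c where c: "?g (stdvec j) = vscale c (stdvec j)" using line[OF eV[OF ij(2)] eN] by blast
    have "g i j = ?g (stdvec j) i" using ij by (simp add: mat_app_col)
    also have "\<dots> = 0" using c ij by (simp add: vscale_def stdvec_def)
    finally show ?thesis .
  qed
  have dg: "g j j = g k k" if "j < 2*r" "k < 2*r" for j k
  proof (cases "j = k")
    case False
    have sV: "stdvec j + stdvec k \<in> Vsp r" using that by (simp add: Vsp_def stdvec_def)
    have sN: "stdvec j + stdvec k \<noteq> (0 :: nat \<Rightarrow> 'a)"
    proof
      assume "stdvec j + stdvec k = (0 :: nat \<Rightarrow> 'a)"
      then have "(stdvec j + stdvec k) j = (0 :: 'a)" by simp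
      then show False using False by (simp add: stdvec_def)
    qed
    obtain c where c: "?g (stdvec j + stdvec k) = vscale c (stdvec j + stdvec k)"
      using line[OF sV sN] by blast
    have gs: "?g (stdvec j + stdvec k) i = g i j + g i k" if "i < 2*r" for i
      using that \<open>j < 2*r\<close> \<open>k < 2*r\<close> by (simp add: mat_app_add mat_app_col)
    have "g j j = c" using gs[of j] c offd[of j k] that False by (simp add: vscale_def stdvec_def)
    moreover have "g k k = c" using gs[of k] c offd[of k j] that False by (simp add: vscale_def stdvec_def)
    ultimately show ?thesis by simp
  qed simp
  define c where "c = g 0 0"
  have r0: "0 < 2*r" using r by simp
  have gc: "g = (\<lambda>i j. c * idmat r i j)"
  proof (rule ext, rule ext)
    fix i j
    show "g i j = c * idmat r i j"
      using ism offd[of i j] dg[of i 0] r0 unfolding c_def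
      by (cases "i < 2*r \<and> j < 2*r") (auto simp: is_mat_def idmat_def)
  qed
  have gcol: "?g (stdvec j) = vscale c (stdvec j)" if "j < 2*r" for j
  proof -
    have m: "?g (stdvec j) = (\<lambda>i. if i < 2*r then g i j else 0)" using that by (simp add: mat_app_col)
    show ?thesis unfolding m by (rule ext) (use that in \<open>auto simp: gc vscale_def stdvec_def idmat_def\<close>)
  qed
  have r1: "1 < 2*r" using r by simp
  have "1 = symp r (stdvec (2*0)) (stdvec (Suc (2*0)) :: nat \<Rightarrow> 'a)"
    using r symp_stdvec_even_l[of 0 r "stdvec (Suc (2*0)) :: nat \<Rightarrow> 'a"] by (simp add: stdvec_def)
  also have "\<dots> = symp r (?g (stdvec (2*0))) (?g (stdvec (Suc (2*0))))"
    using sy[OF eV eV] r0 r1 by simp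
  also have "\<dots> = c * c * symp r (stdvec (2*0)) (stdvec (Suc (2*0)))"
    using r0 r1 by (simp add: gcol symp_scale_l symp_scale_r)
  also have "\<dots> = c * c"
    using r symp_stdvec_even_l[of 0 r "stdvec (Suc (2*0)) :: nat \<Rightarrow> 'a"] by (simp add: stdvec_def)
  finally have "c * c = 1" by simp
  then have "c = 1 \<or> c = -1" by (simp add: square_eq_1_iff)
  then show ?thesis using gc by auto
qed

theorem lemma5p7:
  fixes r :: nat
  assumes r: "1 \<le> r"
    and F: "infinite (UNIV :: 'a::field set) \<or> 3 \<le> card (UNIV :: 'a set)"
  shows "Borel r = (\<lambda>(a,b). blockmat r a b) ` (params r :: ((nat \<Rightarrow> 'a) \<times> (nat \<Rightarrow> 'a)) set)
     \<and> bij_betw (\<lambda>(a,b). blockmat r a b) (params r :: ((nat \<Rightarrow> 'a) \<times> (nat \<Rightarrow> 'a)) set) (Borel r)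
     \<and> (\<forall>p\<in>params r. \<forall>q\<in>(params r :: ((nat \<Rightarrow> 'a) \<times> (nat \<Rightarrow> 'a)) set).
          (\<lambda>(a,b). blockmat r a b) (pmul p q)
            = matmul r ((\<lambda>(a,b). blockmat r a b) p) ((\<lambda>(a,b). blockmat r a b) q))
     \<and> {g \<in> Sp r. \<forall>U\<in>Gamma_obj r. mat_app r g ` U = U}
         = {idmat r, (\<lambda>i j. - idmat r i j) :: nat \<Rightarrow> nat \<Rightarrow> 'a}"
  proof -
  let ?f = "\<lambda>(a,b). blockmat r a b :: nat \<Rightarrow> nat \<Rightarrow> 'a"
  have img: "Borel r = ?f ` (params r :: ((nat \<Rightarrow> 'a) \<times> (nat \<Rightarrow> 'a)) set)"
  proof
    show "Borel r \<subseteq> ?f ` params r"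
    proof
      fix g :: "nat \<Rightarrow> nat \<Rightarrow> 'a" assume "g \<in> Borel r"
      then obtain p where "p \<in> params r" "g = ?f p" using Borel_block by blast
      then show "g \<in> ?f ` params r" by blast
    qed
    show "?f ` params r \<subseteq> Borel r"
    proof (rule image_subsetI)
      fix p :: "(nat \<Rightarrow> 'a) \<times> (nat \<Rightarrow> 'a)"
      assume "p \<in> params r"
      then show "?f p \<in> Borel r" by (cases p) (simp add: blockmat_Borel)
    qed
  qed
  have bij: "bij_betw ?f (params r :: ((nat \<Rightarrow> 'a) \<times> (nat \<Rightarrow> 'a)) set) (Borel r)"
    by (rule bij_betw_imageI[OF blockmat_inj img[symmetric]])
  have mul: "\<forall>p\<in>params r. \<forall>q\<in>(params r :: ((nat \<Rightarrow> 'a) \<times> (nat \<Rightarrow> 'a)) set).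
          ?f (pmul p q) = matmul r (?f p) (?f q)"
  proof (intro ballI)
    fix p q :: "(nat \<Rightarrow> 'a) \<times> (nat \<Rightarrow> 'a)"
    obtain a b where p: "p = (a, b)" by fastforce
    obtain a' b' where q: "q = (a', b')" by fastforce
    show "?f (pmul p q) = matmul r (?f p) (?f q)"
      unfolding p q pmul_def by (simp add: blockmat_mul)
  qed
  have ker: "{g \<in> Sp r. \<forall>U\<in>Gamma_obj r. mat_app r g ` U = U}
         = {idmat r, (\<lambda>i j. - idmat r i j) :: nat \<Rightarrow> nat \<Rightarrow> 'a}"
  proof
    show "{g \<in> Sp r. \<forall>U\<in>Gamma_obj r. mat_app r g ` U = U}
         \<subseteq> {idmat r, (\<lambda>i j. - idmat r i j) :: nat \<Rightarrow> nat \<Rightarrow> 'a}"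
    proof
      fix g :: "nat \<Rightarrow> nat \<Rightarrow> 'a"
      assume "g \<in> {g \<in> Sp r. \<forall>U\<in>Gamma_obj r. mat_app r g ` U = U}"
      then have "g \<in> Sp r" "\<forall>U\<in>Gamma_obj r. mat_app r g ` U = U" by auto
      then have "g = idmat r \<or> g = (\<lambda>i j. - idmat r i j)" by (rule kernel_sub[OF r])
      then show "g \<in> {idmat r, (\<lambda>i j. - idmat r i j) :: nat \<Rightarrow> nat \<Rightarrow> 'a}" by blast
    qed
    show "{idmat r, (\<lambda>i j. - idmat r i j) :: nat \<Rightarrow> nat \<Rightarrow> 'a}
         \<subseteq> {g \<in> Sp r. \<forall>U\<in>Gamma_obj r. mat_app r g ` U = U}"
    proof (intro insert_subsetI empty_subsetI)
      show "idmat r \<in> {g \<in> Sp r. \<forall>U\<in>Gamma_obj r. mat_app r g ` U = (U :: (nat \<Rightarrow> 'a) set)}"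
        by (rule id_in_kernel)
      show "(\<lambda>i j. - idmat r i j) \<in> {g \<in> Sp r. \<forall>U\<in>Gamma_obj r. mat_app r g ` U = (U :: (nat \<Rightarrow> 'a) set)}"
        by (rule negid_in_kernel)
    qed
  qed
  show ?thesis by (intro conjI img bij mul ker)
qed

end
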